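(* Let $P_1,\dots,P_n\subset\mathbb{R}^d$ be convex polytopes each containing the origin, let $\mu\in\mathbb{R}^d$, and let $\Delta=\Delta(\mathcal{P};\mu)$. Let $\sigma,\tau\in\Delta$ be faces with $\sigma\cup\tau\in\Delta$. Then for any line $\ell$ through $\mu$, the sets $P_\sigma\cap\ell$ and $P_\tau\cap\ell$ lie on the same side of $\mu$, i.e. they are contained in the same connected component of $\ell\setminus\{\mu\}$.
   Context: For $\sigma\subseteq[n]$ write $P_\sigma=\sum_{i\in\sigma}P_i$ (Minkowski sum), with $P_\emptyset=\{0\}$; the Minkowski complex $\Delta(\mathcal{P};\mu)$ is the simplicial complex on vertex set $[n]$ whose faces are the $\sigma\subseteq[n]$ with $\mu\notin P_\sigma$. *)

theory Defs
  imports "HOL-Analysis.Analysis"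
begin

definition msum :: "(nat \<Rightarrow> 'a::euclidean_space set) \<Rightarrow> nat set \<Rightarrow> 'a set" where
  "msum P \<sigma> = {(\<Sum>i\<in>\<sigma>. x i) | x. \<forall>i\<in>\<sigma>. x i \<in> P i}"

definition minkowski_complex :: "nat \<Rightarrow> (nat \<Rightarrow> 'a::euclidean_space set) \<Rightarrow> 'a \<Rightarrow> nat set set" where
  "minkowski_complex n P \<mu> = {\<sigma>. \<sigma> \<subseteq> {1..n} \<and> \<mu> \<notin> msum P \<sigma>}"

definition line_through :: "'a::euclidean_space \<Rightarrow> 'a \<Rightarrow> 'a set" where
  "line_through \<mu> v = {\<mu> + t *\<^sub>R v | t. True}"

end

theory Submission
  imports Defs
begin

lemma msum_mono0:
  assumes "\<And>i. i \<in> B - A \<Longrightarrow> 0 \<in> P i" "A \<subseteq> B" "finite B"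
  shows "msum P A \<subseteq> msum P B"
proof
  fix y assume "y \<in> msum P A"
  then obtain x where y: "y = (\<Sum>i\<in>A. x i)" and x: "\<forall>i\<in>A. x i \<in> P i"
    unfolding msum_def by blast
  define z where "z = (\<lambda>i. if i \<in> A then x i else 0)"
  have "(\<Sum>i\<in>B. z i) = (\<Sum>i\<in>A. z i)"
    using assms(2,3) by (intro sum.mono_neutral_right) (auto simp: z_def)
  also have "\<dots> = y" using y by (simp add: z_def)
  finally have "y = (\<Sum>i\<in>B. z i)" by simp
  moreover have "\<forall>i\<in>B. z i \<in> P i" using x assms(1) by (auto simp: z_def)
  ultimately show "y \<in> msum P B" unfolding msum_def by blast
qed

lemma msum_convex:
  assumes "\<And>i. i \<in> A \<Longrightarrow> convex (P i)"
  shows "convex (msum P A)"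
  unfolding convex_def
proof (intro allI ballI impI)
  fix a b and u w :: real
  assume a: "a \<in> msum P A" and b: "b \<in> msum P A" and uw: "0 \<le> u" "0 \<le> w" "u + w = 1"
  obtain x where xa: "a = (\<Sum>i\<in>A. x i)" and x: "\<forall>i\<in>A. x i \<in> P i"
    using a unfolding msum_def by blast
  obtain y where yb: "b = (\<Sum>i\<in>A. y i)" and y: "\<forall>i\<in>A. y i \<in> P i"
    using b unfolding msum_def by blast
  have "u *\<^sub>R a + w *\<^sub>R b = (\<Sum>i\<in>A. u *\<^sub>R x i + w *\<^sub>R y i)"
    by (simp add: xa yb scaleR_sum_right sum.distrib)
  moreover have "\<forall>i\<in>A. u *\<^sub>R x i + w *\<^sub>R y i \<in> P i"
    using x y assms uw by (auto simp: convex_def)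
  ultimately show "u *\<^sub>R a + w *\<^sub>R b \<in> msum P A" unfolding msum_def by blast
qed

lemma side:
  fixes Q :: "'a::euclidean_space set"
  assumes "convex Q" "\<mu> \<notin> Q"
  shows "Q \<inter> line_through \<mu> v \<subseteq> {\<mu> + t *\<^sub>R v | t. t > 0} \<or>
         Q \<inter> line_through \<mu> v \<subseteq> {\<mu> + t *\<^sub>R v | t. t < 0}"
proof (rule ccontr)
  assume "\<not> ?thesis"
  then obtain s t where s: "\<mu> + s *\<^sub>R v \<in> Q" "\<not> s > 0" and t: "\<mu> + t *\<^sub>R v \<in> Q" "\<not> t < 0"
    unfolding line_through_def by blast
  have "s \<noteq> 0" "t \<noteq> 0" using s t assms(2) by auto
  hence st: "s < 0" "t > 0" using s t by auto
  define u where "u = t / (t - s)"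
  have u: "0 \<le> u" "u \<le> 1" using st by (auto simp: u_def field_simps)
  have "u *\<^sub>R (\<mu> + s *\<^sub>R v) + (1 - u) *\<^sub>R (\<mu> + t *\<^sub>R v) \<in> Q"
    using assms(1) s t u by (auto simp: convex_def)
  moreover have "u * s + (1 - u) * t = 0" using st by (simp add: u_def field_simps)
  hence "u *\<^sub>R (\<mu> + s *\<^sub>R v) + (1 - u) *\<^sub>R (\<mu> + t *\<^sub>R v) = \<mu> + (u * s + (1 - u) * t) *\<^sub>R v"
    by (simp add: algebra_simps scaleR_add_left[symmetric] del: scaleR_add_left)
  ultimately show False using assms(2) \<open>u * s + (1 - u) * t = 0\<close> by simp
qed

lemma ray_conn: "connected {\<mu> + t *\<^sub>R (v::'a::euclidean_space) | t. t \<in> S}" if "connected (S::real set)"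
proof -
  have "{\<mu> + t *\<^sub>R v | t. t \<in> S} = (\<lambda>t. \<mu> + t *\<^sub>R v) ` S" by auto
  moreover have "continuous_on S (\<lambda>t. \<mu> + t *\<^sub>R v)" by (intro continuous_intros)
  ultimately show ?thesis using connected_continuous_image that by metis
qed

theorem lemma5:
  fixes P :: "nat \<Rightarrow> 'a::euclidean_space set" and n :: nat and \<mu> v :: 'a
    and \<sigma> \<tau> :: "nat set"
  assumes polys: "\<And>i. i \<in> {1..n} \<Longrightarrow> polytope (P i)"
    and orig: "\<And>i. i \<in> {1..n} \<Longrightarrow> 0 \<in> P i"
    and sig: "\<sigma> \<in> minkowski_complex n P \<mu>"
    and tau: "\<tau> \<in> minkowski_complex n P \<mu>"
    and un: "\<sigma> \<union> \<tau> \<in> minkowski_complex n P \<mu>"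
    and v: "v \<noteq> 0"
  shows "\<exists>C \<in> components (line_through \<mu> v - {\<mu>}).
           msum P \<sigma> \<inter> line_through \<mu> v \<subseteq> C \<and> msum P \<tau> \<inter> line_through \<mu> v \<subseteq> C"
proof -
  let ?Q = "msum P (\<sigma> \<union> \<tau>)"
  let ?L = "line_through \<mu> v"
  have sub: "\<sigma> \<union> \<tau> \<subseteq> {1..n}" and mu: "\<mu> \<notin> ?Q" using un by (auto simp: minkowski_complex_def)
  have fin: "finite (\<sigma> \<union> \<tau>)" using sub finite_subset by blast
  have cQ: "convex ?Q" using sub polys by (intro msum_convex) (meson subsetD polytope_imp_convex)
  have s1: "msum P \<sigma> \<subseteq> ?Q" using sub orig fin by (intro msum_mono0) auto
  have s2: "msum P \<tau> \<subseteq> ?Q" using sub orig fin by (intro msum_mono0) auto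
  have ray: "\<exists>C \<in> components (?L - {\<mu>}). R \<subseteq> C"
    if R: "R = {\<mu> + t *\<^sub>R v | t. t \<in> S}" "connected S" "0 \<notin> S" for R S
  proof -
    have "R \<subseteq> ?L - {\<mu>}" using R v by (auto simp: line_through_def)
    moreover have "?L - {\<mu>} \<noteq> {}"
    proof -
      have "\<mu> + 1 *\<^sub>R v \<in> ?L - {\<mu>}" using v unfolding line_through_def by (auto intro!: exI[of _ 1])
      thus ?thesis by blast
    qed
    moreover have "connected R" using R ray_conn by blast
    ultimately show ?thesis using exists_component_superset by blast
  qed
  have p: "\<exists>C \<in> components (?L - {\<mu>}). {\<mu> + t *\<^sub>R v | t. t \<in> {0<..}} \<subseteq> C"
    by (rule ray) auto
  have m: "\<exists>C \<in> components (?L - {\<mu>}). {\<mu> + t *\<^sub>R v | t. t \<in> {..<0}} \<subseteq> C"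
    by (rule ray) auto
  from side[OF cQ mu, of v] show ?thesis
  proof
    assume h: "?Q \<inter> ?L \<subseteq> {\<mu> + t *\<^sub>R v | t. t > 0}"
    from p obtain C where "C \<in> components (?L - {\<mu>})" "{\<mu> + t *\<^sub>R v | t. t \<in> {0<..}} \<subseteq> C" by blast
    thus ?thesis using h s1 s2 by (intro bexI[of _ C]) blast+
  next
    assume h: "?Q \<inter> ?L \<subseteq> {\<mu> + t *\<^sub>R v | t. t < 0}"
    from m obtain C where "C \<in> components (?L - {\<mu>})" "{\<mu> + t *\<^sub>R v | t. t \<in> {..<0}} \<subseteq> C" by blast
    thus ?thesis using h s1 s2 by (intro bexI[of _ C]) blast+
  qed
qed

end
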